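(* The lumped bilinear form is coercive on $\Sigma_{k,k',h}$: $(\mathcal{A}\tau,\tau)_h\gtrsim\|\tau\|_0^2$ for all $\tau\in\Sigma_{k,k',h}$, with a constant independent of $h$.
   Context: $\mathbb{S}$ real symmetric $2\times2$ matrices; $\mathcal{A}\sigma=\frac{1}{2\mu}\big(\sigma-\frac{\lambda}{2\mu+2\lambda}\mathrm{tr}(\sigma)I\big)$, $\lambda,\mu>0$; $A:B=\sum_{ij}a_{ij}b_{ij}$. $\{\mathcal{T}_h\}$ conforming shape-regular triangulations of polygonal $\Omega\subset\mathbb{R}^2$. For integers $k'>k\ge3$: $b_K=\lambda_1\lambda_2\lambda_3$, $P_i^{hom}(K;X)$ homogeneous polynomials of degree $i$, $P_{k,k'}(K;X)=P_k(K;X)+b_KP_{k'-3}(K;X)$; $\Sigma_{k,h}=\{\tau\in H^1(\Omega;\mathbb{S}):\tau|_K\in P_k(K;\mathbb{S})\}+\{\tau\in H(\mathrm{div},\Omega;\mathbb{S}):\tau|_K\in P_k(K;\mathbb{S}),\ \tau\nu|_{\partial K}=0\ \forall K\}$, $\Lambda_{k,k'}=\{\tau\in H(\mathrm{div},\Omega;\mathbb{S}):\tau|_K\in\sum_{i=k-2}^{k'-3}b_KP_i^{hom}(K;\mathbb{S})\ \forall K\}$, $\Sigma_{k,k',h}=\Sigma_{k,h}\oplus\Lambda_{k,k'}$. Quadrature: on each $K$, nodes $\chi_1,\dots,\chi_r\in K$ (images under the affine map $F_K$ of fixed reference nodes) form a unisolvent Lagrange node set for $P_{k,k'}(K;\mathbb{R})$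 (vertices included, and the nodes on each edge are unisolvent for polynomials of degree $k$ on that edge), and $I_{k,k',K}(g)=\sum_{i=1}^r w_ig(\chi_i)$ with (B1) all weights $w_i>0$ and (B2) $I_{k,k',K}(g)=\int_Kg\,dx$ for all $g\in P_{k+k'-2}(K)$. The lumped form is $(\mathcal{A}\sigma,\tau)_h=\sum_{K\in\mathcal{T}_h}I_{k,k',K}(\mathcal{A}\sigma:\tau)$. *)

theory Defs
  imports "HOL-Analysis.Analysis" "HOL-Computational_Algebra.Polynomial"
begin

type_synonym pt = "real^2"
type_synonym mat2 = "real^2^2"

section \<open>Matrices\<close>

definition frob :: "mat2 \<Rightarrow> mat2 \<Rightarrow> real" where
  "frob A B = (\<Sum>i\<in>UNIV. \<Sum>j\<in>UNIV. A$i$j * B$i$j)"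

definition tr2 :: "mat2 \<Rightarrow> real" where
  "tr2 A = A$1$1 + A$2$2"

text \<open>Compliance tensor: A sigma = 1/(2 mu) (sigma - lambda/(2mu+2lambda) tr(sigma) I).\<close>
definition Acomp :: "real \<Rightarrow> real \<Rightarrow> mat2 \<Rightarrow> mat2" where
  "Acomp lam mu A = (1 / (2 * mu)) *\<^sub>R (A - (lam / (2 * mu + 2 * lam) * tr2 A) *\<^sub>R mat 1)"

section \<open>Triangles and triangulations\<close>

definition triangle :: "pt set \<Rightarrow> bool" where
  "triangle K \<longleftrightarrow> (\<exists>a b c. \<not> collinear {a, b, c} \<and> K = convex hull {a, b, c})"

definition verts :: "pt set \<Rightarrow> pt set" where
  "verts K = {v. v extreme_point_of K}"

definition ref_tri :: "pt set" where
  "ref_tri = convex hull {0, axis 1 1, axis 2 1}"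

text \<open>Barycentric coordinate of x w.r.t. vertex v of the triangle K.\<close>
definition bary :: "pt set \<Rightarrow> pt \<Rightarrow> pt \<Rightarrow> real" where
  "bary K v x = (THE l. (\<forall>w. w \<notin> verts K \<longrightarrow> l w = 0) \<and>
                        (\<Sum>w\<in>verts K. l w) = 1 \<and>
                        (\<Sum>w\<in>verts K. l w *\<^sub>R w) = x) v"

text \<open>Element bubble b_K = lambda_1 lambda_2 lambda_3.\<close>
definition bubble :: "pt set \<Rightarrow> pt \<Rightarrow> real" where
  "bubble K x = (\<Prod>v\<in>verts K. bary K v x)"

definition conforming_triangulation :: "pt set \<Rightarrow> pt set set \<Rightarrow> bool" where
  "conforming_triangulation \<Omega> T \<longleftrightarrow>
     finite T \<and> T \<noteq> {} \<and> (\<forall>K\<in>T. triangle K) \<and> \<Union>T = closure \<Omega> \<and>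
     (\<forall>K\<in>T. \<forall>K'\<in>T. K \<noteq> K' \<longrightarrow>
        K \<inter> K' = {} \<or>
        (\<exists>v. v \<in> verts K \<inter> verts K' \<and> K \<inter> K' = {v}) \<or>
        (\<exists>a b. a \<noteq> b \<and> a \<in> verts K \<inter> verts K' \<and> b \<in> verts K \<inter> verts K' \<and>
               K \<inter> K' = closed_segment a b))"

definition polygonal_domain :: "pt set \<Rightarrow> bool" where
  "polygonal_domain \<Omega> \<longleftrightarrow> open \<Omega> \<and> connected \<Omega> \<and> bounded \<Omega> \<and> \<Omega> \<noteq> {} \<and>
     interior (closure \<Omega>) = \<Omega> \<and>
     (\<exists>T. finite T \<and> (\<forall>K\<in>T. triangle K) \<and> \<Union>T = closure \<Omega>)"

definition inradius :: "pt set \<Rightarrow> real" where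
  "inradius K = Sup {r. \<exists>x. ball x r \<subseteq> K}"

text \<open>Shape regularity of a family of triangulations: diam K / rho_K uniformly bounded.\<close>
definition shape_regular :: "pt set set set \<Rightarrow> bool" where
  "shape_regular F \<longleftrightarrow> (\<exists>s. \<forall>T\<in>F. \<forall>K\<in>T. diameter K \<le> s * inradius K)"

section \<open>Polynomials in two variables\<close>

definition poly2 :: "nat \<Rightarrow> (pt \<Rightarrow> real) set" where
  "poly2 n = {f. \<exists>c. \<forall>x. f x = (\<Sum>i\<le>n. \<Sum>j\<le>n - i. c i j * x$1 ^ i * x$2 ^ j)}"

text \<open>Sum of the spaces of homogeneous polynomials of degrees a, ..., b.\<close>
definition homsum2 :: "nat \<Rightarrow> nat \<Rightarrow> (pt \<Rightarrow> real) set" where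
  "homsum2 a b = {f. \<exists>c. \<forall>x. f x = (\<Sum>i\<in>{a..b}. \<Sum>j\<le>i. c i j * x$1 ^ j * x$2 ^ (i - j))}"

text \<open>Symmetric-matrix-valued functions with all entries in V.\<close>
definition symmat_in :: "(pt \<Rightarrow> real) set \<Rightarrow> (pt \<Rightarrow> mat2) \<Rightarrow> bool" where
  "symmat_in V p \<longleftrightarrow> (\<forall>i j. (\<lambda>x. p x $ i $ j) \<in> V) \<and> (\<forall>x. transpose (p x) = p x)"

text \<open>P_{k,k'}(K) = P_k(K) + b_K P_{k'-3}(K).\<close>
definition Pkk :: "nat \<Rightarrow> nat \<Rightarrow> pt set \<Rightarrow> (pt \<Rightarrow> real) set" where
  "Pkk k k' K = {(\<lambda>x. p x + bubble K x * q x) | p q. p \<in> poly2 k \<and> q \<in> poly2 (k' - 3)}"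

text \<open>tau restricted to K (a.e., i.e. on the interior) lies in P_n(K;S).\<close>
definition restr_poly :: "nat \<Rightarrow> pt set \<Rightarrow> (pt \<Rightarrow> mat2) \<Rightarrow> bool" where
  "restr_poly n K \<tau> \<longleftrightarrow> (\<exists>p. symmat_in (poly2 n) p \<and> (\<forall>x\<in>interior K. \<tau> x = p x))"

text \<open>tau restricted to K lies in sum_{i=k-2}^{k'-3} b_K P_i^hom(K;S).\<close>
definition restr_bubble :: "nat \<Rightarrow> nat \<Rightarrow> pt set \<Rightarrow> (pt \<Rightarrow> mat2) \<Rightarrow> bool" where
  "restr_bubble k k' K \<tau> \<longleftrightarrow>
     (\<exists>q. symmat_in (homsum2 (k - 2) (k' - 3)) q \<and> (\<forall>x\<in>interior K. \<tau> x = bubble K x *\<^sub>R q x))"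

text \<open>Value of tau|_K (continuous extension from the interior of K) at x.\<close>
definition elem_val :: "pt set \<Rightarrow> (pt \<Rightarrow> mat2) \<Rightarrow> pt \<Rightarrow> mat2" where
  "elem_val K \<tau> x = Lim (at x within interior K) \<tau>"

definition edge_normal :: "pt \<Rightarrow> pt \<Rightarrow> pt" where
  "edge_normal a b = vector [- ((b - a) $ 2), (b - a) $ 1]"

text \<open>tau nu = 0 on the boundary of K (for the element-wise polynomial).\<close>
definition zero_normal_trace :: "pt set \<Rightarrow> (pt \<Rightarrow> mat2) \<Rightarrow> bool" where
  "zero_normal_trace K \<tau> \<longleftrightarrow> (\<forall>a\<in>verts K. \<forall>b\<in>verts K. a \<noteq> b \<longrightarrow>
      (\<forall>x\<in>closed_segment a b. elem_val K \<tau> x *v edge_normal a b = 0))"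

section \<open>Sobolev-type spaces\<close>

definition partial :: "2 \<Rightarrow> (pt \<Rightarrow> real) \<Rightarrow> pt \<Rightarrow> real" where
  "partial l f x = frechet_derivative f (at x) (axis l 1)"

fun Ck :: "nat \<Rightarrow> (pt \<Rightarrow> real) \<Rightarrow> bool" where
  "Ck 0 f = continuous_on UNIV f"
| "Ck (Suc n) f = ((\<forall>x. f differentiable (at x)) \<and> (\<forall>l. Ck n (partial l f)))"

definition test_fun :: "pt set \<Rightarrow> (pt \<Rightarrow> real) \<Rightarrow> bool" where
  "test_fun \<Omega> \<phi> \<longleftrightarrow> (\<forall>n. Ck n \<phi>) \<and> compact (closure {x. \<phi> x \<noteq> 0}) \<and>
                      closure {x. \<phi> x \<noteq> 0} \<subseteq> \<Omega>"

definition L2 :: "pt set \<Rightarrow> (pt \<Rightarrow> real) \<Rightarrow> bool" where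
  "L2 \<Omega> f \<longleftrightarrow> f \<in> borel_measurable (lebesgue_on \<Omega>) \<and> integrable (lebesgue_on \<Omega>) (\<lambda>x. (f x)\<^sup>2)"

definition L2S :: "pt set \<Rightarrow> (pt \<Rightarrow> mat2) \<Rightarrow> bool" where
  "L2S \<Omega> \<tau> \<longleftrightarrow> (\<forall>x\<in>\<Omega>. transpose (\<tau> x) = \<tau> x) \<and> (\<forall>i j. L2 \<Omega> (\<lambda>x. \<tau> x $ i $ j))"

definition H1S :: "pt set \<Rightarrow> (pt \<Rightarrow> mat2) \<Rightarrow> bool" where
  "H1S \<Omega> \<tau> \<longleftrightarrow> L2S \<Omega> \<tau> \<and>
     (\<forall>i j l. \<exists>g. L2 \<Omega> g \<and> (\<forall>\<phi>. test_fun \<Omega> \<phi> \<longrightarrow>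
        integral\<^sup>L (lebesgue_on \<Omega>) (\<lambda>x. \<tau> x $ i $ j * partial l \<phi> x) =
        - integral\<^sup>L (lebesgue_on \<Omega>) (\<lambda>x. g x * \<phi> x)))"

definition HdivS :: "pt set \<Rightarrow> (pt \<Rightarrow> mat2) \<Rightarrow> bool" where
  "HdivS \<Omega> \<tau> \<longleftrightarrow> L2S \<Omega> \<tau> \<and>
     (\<forall>i. \<exists>g. L2 \<Omega> g \<and> (\<forall>\<phi>. test_fun \<Omega> \<phi> \<longrightarrow>
        integral\<^sup>L (lebesgue_on \<Omega>) (\<lambda>x. \<Sum>j\<in>UNIV. \<tau> x $ i $ j * partial j \<phi> x) =
        - integral\<^sup>L (lebesgue_on \<Omega>) (\<lambda>x. g x * \<phi> x)))"

definition L2sq :: "pt set \<Rightarrow> (pt \<Rightarrow> mat2) \<Rightarrow> real" where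
  "L2sq \<Omega> \<tau> = integral\<^sup>L (lebesgue_on \<Omega>) (\<lambda>x. frob (\<tau> x) (\<tau> x))"

section \<open>Finite element spaces\<close>

definition Sigma_kh :: "nat \<Rightarrow> pt set \<Rightarrow> pt set set \<Rightarrow> (pt \<Rightarrow> mat2) set" where
  "Sigma_kh k \<Omega> T =
     {(\<lambda>x. \<sigma>1 x + \<sigma>2 x) | \<sigma>1 \<sigma>2.
        (H1S \<Omega> \<sigma>1 \<and> (\<forall>K\<in>T. restr_poly k K \<sigma>1)) \<and>
        (HdivS \<Omega> \<sigma>2 \<and> (\<forall>K\<in>T. restr_poly k K \<sigma>2 \<and> zero_normal_trace K \<sigma>2))}"

definition Lambda_kk :: "nat \<Rightarrow> nat \<Rightarrow> pt set \<Rightarrow> pt set set \<Rightarrow> (pt \<Rightarrow> mat2) set" where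
  "Lambda_kk k k' \<Omega> T = {\<tau>. HdivS \<Omega> \<tau> \<and> (\<forall>K\<in>T. restr_bubble k k' K \<tau>)}"

definition Sigma_kkh :: "nat \<Rightarrow> nat \<Rightarrow> pt set \<Rightarrow> pt set set \<Rightarrow> (pt \<Rightarrow> mat2) set" where
  "Sigma_kkh k k' \<Omega> T =
     {(\<lambda>x. \<sigma> x + \<tau> x) | \<sigma> \<tau>. \<sigma> \<in> Sigma_kh k \<Omega> T \<and> \<tau> \<in> Lambda_kk k k' \<Omega> T}"

section \<open>Quadrature\<close>

definition unisolvent :: "(pt \<Rightarrow> real) set \<Rightarrow> (nat \<Rightarrow> pt) \<Rightarrow> nat \<Rightarrow> bool" where
  "unisolvent V nd r \<longleftrightarrow> (\<forall>c. \<exists>!p. p \<in> V \<and> (\<forall>i<r. p (nd i) = c i))"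

definition edge_param :: "pt \<Rightarrow> pt \<Rightarrow> pt \<Rightarrow> real" where
  "edge_param a b x = ((x - a) \<bullet> (b - a)) / ((b - a) \<bullet> (b - a))"

text \<open>The nodes lying on the edge [a,b] are unisolvent for polynomials of degree k on that edge.\<close>
definition edge_unisolvent :: "nat \<Rightarrow> pt \<Rightarrow> pt \<Rightarrow> (nat \<Rightarrow> pt) \<Rightarrow> nat \<Rightarrow> bool" where
  "edge_unisolvent k a b nd r \<longleftrightarrow>
     (\<forall>c. \<exists>!p :: real poly. degree p \<le> k \<and>
        (\<forall>i<r. nd i \<in> closed_segment a b \<longrightarrow> poly p (edge_param a b (nd i)) = c i))"

text \<open>Lumped form (A sigma, tau)_h = sum_K sum_i w_i (A sigma|_K(chi_i)) : tau|_K(chi_i).\<close>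
definition lumped :: "real \<Rightarrow> real \<Rightarrow> nat \<Rightarrow> (pt set \<Rightarrow> nat \<Rightarrow> real) \<Rightarrow>
                      (pt set \<Rightarrow> nat \<Rightarrow> pt) \<Rightarrow> pt set set \<Rightarrow> (pt \<Rightarrow> mat2) \<Rightarrow> (pt \<Rightarrow> mat2) \<Rightarrow> real" where
  "lumped lam mu r w nd T \<sigma> \<tau> =
     (\<Sum>K\<in>T. \<Sum>i<r. w K i * frob (Acomp lam mu (elem_val K \<sigma> (nd K i))) (elem_val K \<tau> (nd K i)))"

end

theory Submission
  imports Defs
begin


definition tm :: "real \<times> nat \<times> nat \<Rightarrow> pt \<Rightarrow> real" where
  "tm t x = fst t * x$1 ^ fst (snd t) * x$2 ^ snd (snd t)"

definition Q :: "nat \<Rightarrow> (pt \<Rightarrow> real) \<Rightarrow> bool" where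
  "Q n f \<longleftrightarrow> (\<exists>L. (\<forall>t\<in>set L. fst (snd t) + snd (snd t) \<le> n) \<and> (\<forall>x. f x = (\<Sum>t\<leftarrow>L. tm t x)))"

lemma Q_zero: "Q n (\<lambda>x. 0)"
  unfolding Q_def by (rule exI[of _ "[]"]) simp

lemma Q_const: "Q n (\<lambda>x. a)"
  unfolding Q_def by (rule exI[of _ "[(a,0,0)]"]) (simp add: tm_def)

lemma Q_x1: "Q 1 (\<lambda>x. x$1)"
  unfolding Q_def by (rule exI[of _ "[(1,1,0)]"]) (simp add: tm_def)

lemma Q_x2: "Q 1 (\<lambda>x. x$2)"
  unfolding Q_def by (rule exI[of _ "[(1,0,1)]"]) (simp add: tm_def)

lemma Q_mono: "Q n f \<Longrightarrow> n \<le> m \<Longrightarrow> Q m f"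
  unfolding Q_def by (meson order_trans)

lemma Q_add: "Q n f \<Longrightarrow> Q n g \<Longrightarrow> Q n (\<lambda>x. f x + g x)"
  unfolding Q_def
  apply (elim exE conjE)
  subgoal for Ls Lt by (rule exI[of _ "Ls @ Lt"]) auto
  done

lemma sum_list_scale: "(\<Sum>t\<leftarrow>L. tm (a * fst t, snd t) x) = a * (\<Sum>t\<leftarrow>L. tm t x)"
  by (induction L) (auto simp: tm_def algebra_simps)

lemma Q_scale: "Q n f \<Longrightarrow> Q n (\<lambda>x. a * f x)"
  unfolding Q_def
  apply (elim exE conjE)
  subgoal for L by (rule exI[of _ "map (\<lambda>t. (a * fst t, snd t)) L"]) (auto simp: o_def sum_list_scale)
  done

definition tprod :: "real \<times> nat \<times> nat \<Rightarrow> real \<times> nat \<times> nat \<Rightarrow> real \<times> nat \<times> nat" where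
  "tprod s t = (fst s * fst t, fst (snd s) + fst (snd t), snd (snd s) + snd (snd t))"

lemma tm_tprod: "tm (tprod s t) x = tm s x * tm t x"
  by (simp add: tm_def tprod_def power_add algebra_simps)

lemma sum_list_tprod1: "(\<Sum>t\<leftarrow>map (tprod s) L. tm t x) = tm s x * (\<Sum>t\<leftarrow>L. tm t x)"
  by (induction L) (auto simp: tm_tprod algebra_simps)

lemma sum_list_tprod: "(\<Sum>t\<leftarrow>concat (map (\<lambda>s. map (tprod s) Lt) Ls). tm t x) =
    (\<Sum>t\<leftarrow>Ls. tm t x) * (\<Sum>t\<leftarrow>Lt. tm t x)"
  by (induction Ls) (auto simp: o_def tm_tprod sum_list_const_mult algebra_simps)

lemma Q_mult: "Q n f \<Longrightarrow> Q m g \<Longrightarrow> Q (n + m) (\<lambda>x. f x * g x)"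
proof -
  assume "Q n f" "Q m g"
  then obtain Ls Lt where Ls: "\<forall>t\<in>set Ls. fst (snd t) + snd (snd t) \<le> n" "\<forall>x. f x = (\<Sum>t\<leftarrow>Ls. tm t x)"
    and Lt: "\<forall>t\<in>set Lt. fst (snd t) + snd (snd t) \<le> m" "\<forall>x. g x = (\<Sum>t\<leftarrow>Lt. tm t x)"
    unfolding Q_def by blast
  show ?thesis unfolding Q_def
  proof (intro exI conjI ballI allI)
    fix u assume "u \<in> set (concat (map (\<lambda>s. map (tprod s) Lt) Ls))"
    then obtain s t where st: "s \<in> set Ls" "t \<in> set Lt" "u = tprod s t" by auto
    have "fst (snd s) + snd (snd s) \<le> n" "fst (snd t) + snd (snd t) \<le> m" using st Ls Lt by auto
    then show "fst (snd u) + snd (snd u) \<le> n + m" using st(3) by (simp add: tprod_def)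
  next
    fix x show "f x * g x = (\<Sum>t\<leftarrow>concat (map (\<lambda>s. map (tprod s) Lt) Ls). tm t x)"
      by (simp only: sum_list_tprod Ls(2) Lt(2))
  qed
qed

lemma Q_sum: "finite A \<Longrightarrow> (\<And>a. a \<in> A \<Longrightarrow> Q n (f a)) \<Longrightarrow> Q n (\<lambda>x. \<Sum>a\<in>A. f a x)"
  by (induction A rule: finite_induct) (auto intro: Q_zero Q_add)

lemma Q_pow: "Q 1 g \<Longrightarrow> Q m (\<lambda>x. g x ^ m)"
proof (induction m)
  case 0 then show ?case using Q_const[of 0 1] by simp
next
  case (Suc m)
  then have "Q (1 + m) (\<lambda>x. g x * g x ^ m)" by (intro Q_mult) auto
  then show ?case by simp
qed

lemma Q_mon: "Q (i + j) (\<lambda>x. x$1 ^ i * x$2 ^ j)"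
  by (intro Q_mult Q_pow Q_x1 Q_x2)

lemma Q_tm: "Q (fst (snd t) + snd (snd t)) (tm t)"
proof -
  have "Q (fst (snd t) + snd (snd t)) (\<lambda>x. fst t * (x$1 ^ fst (snd t) * x$2 ^ snd (snd t)))"
    by (intro Q_scale Q_mon)
  then show ?thesis unfolding tm_def by (simp add: mult.assoc)
qed

lemma Q_cong: "Q n f \<Longrightarrow> (\<And>x. f x = g x) \<Longrightarrow> Q n g"
  by (metis ext)

lemma Q_affine_comp1: "Q 1 (\<lambda>x. (B *v x + c) $ i)"
proof -
  have eq: "B$i$1 * x$1 + B$i$2 * x$2 + c$i = (B *v x + c) $ i" for x
    by (simp add: matrix_vector_mult_def sum_2)
  have q: "Q 1 (\<lambda>x. B$i$1 * x$1 + B$i$2 * x$2 + c$i)"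
    by (intro Q_add Q_scale Q_x1 Q_x2 Q_const)
  show ?thesis by (rule Q_cong[OF q eq])
qed

lemma Q_comp_affine:
  assumes "Q n f" shows "Q n (\<lambda>x. f (B *v x + c))"
proof -
  from assms obtain L where L1: "\<forall>t\<in>set L. fst (snd t) + snd (snd t) \<le> n"
     and L2: "\<forall>x. f x = (\<Sum>t\<leftarrow>L. tm t x)"
    unfolding Q_def by blast
  have "Q n (\<lambda>x. \<Sum>t\<leftarrow>L. tm t (B *v x + c))" using L1
  proof (induction L)
    case Nil then show ?case by (simp add: Q_zero)
  next
    case (Cons t L)
    have a: "Q (fst (snd t)) (\<lambda>x. (B *v x + c)$1 ^ fst (snd t))"
      by (rule Q_pow[OF Q_affine_comp1])
    have b: "Q (snd (snd t)) (\<lambda>x. (B *v x + c)$2 ^ snd (snd t))"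
      by (rule Q_pow[OF Q_affine_comp1])
    have "Q (fst (snd t) + snd (snd t)) (\<lambda>x. fst t * ((B *v x + c)$1 ^ fst (snd t) * (B *v x + c)$2 ^ snd (snd t)))"
      by (rule Q_scale[OF Q_mult[OF a b]])
    then have "Q (fst (snd t) + snd (snd t)) (\<lambda>x. tm t (B *v x + c))"
      by (rule Q_cong) (simp add: tm_def mult.assoc)
    moreover have "fst (snd t) + snd (snd t) \<le> n" using Cons.prems by simp
    ultimately have t: "Q n (\<lambda>x. tm t (B *v x + c))"
      by (rule Q_mono)
    have "\<forall>t\<in>set L. fst (snd t) + snd (snd t) \<le> n" using Cons.prems by simp
    then have "Q n (\<lambda>x. \<Sum>t\<leftarrow>L. tm t (B *v x + c))"
      by (rule Cons.IH)
    with t have "Q n (\<lambda>x. tm t (B *v x + c) + (\<Sum>t\<leftarrow>L. tm t (B *v x + c)))"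
      by (rule Q_add)
    then show ?case by simp
  qed
  then show ?thesis by (rule Q_cong) (simp add: L2)
qed

lemma Q_continuous: "Q n f \<Longrightarrow> continuous_on UNIV f"
proof -
  assume "Q n f"
  then obtain L where L: "\<And>x. f x = (\<Sum>t\<leftarrow>L. tm t x)" unfolding Q_def by blast
  have c: "continuous_on UNIV (tm t)" for t
    unfolding tm_def by (intro continuous_on_mult continuous_on_const continuous_on_power continuous_on_component continuous_on_id)
  have cont: "continuous_on UNIV (\<lambda>x. \<Sum>t\<leftarrow>L. tm t x)"
  proof (induction L)
    case Nil then show ?case by (simp add: continuous_on_const)
  next
    case (Cons t L)
    have "continuous_on UNIV (\<lambda>x. tm t x + (\<Sum>t\<leftarrow>L. tm t x))"
      by (rule continuous_on_add[OF c Cons.IH])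
    then show ?case by simp
  qed
  have eq: "f = (\<lambda>x. \<Sum>t\<leftarrow>L. tm t x)" using L by (intro ext)
  show ?thesis unfolding eq by (rule cont)
qed

lemma poly2_Q: "f \<in> poly2 n \<Longrightarrow> Q n f"
proof -
  assume "f \<in> poly2 n"
  then obtain c where c: "\<And>x. f x = (\<Sum>i\<le>n. \<Sum>j\<le>n - i. c i j * x$1 ^ i * x$2 ^ j)"
    unfolding poly2_def by blast
  have "Q n (\<lambda>x. \<Sum>i\<le>n. \<Sum>j\<le>n - i. c i j * x$1 ^ i * x$2 ^ j)"
  proof (intro Q_sum)
    fix i j assume i: "i \<in> {..n}" and j: "j \<in> {..n - i}"
    have "Q (i + j) (\<lambda>x. c i j * (x$1 ^ i * x$2 ^ j))" by (intro Q_scale Q_mon)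
    then have "Q n (\<lambda>x. c i j * (x$1 ^ i * x$2 ^ j))" by (rule Q_mono) (use i j in auto)
    then show "Q n (\<lambda>x. c i j * x$1 ^ i * x$2 ^ j)" by (rule Q_cong) (simp add: mult.assoc)
  qed auto
  then show ?thesis by (rule Q_cong) (simp add: c)
qed

lemma delta_tri:
  assumes "a + b \<le> n"
  shows "(\<Sum>i\<le>n. \<Sum>j\<le>n - i. (if i = a \<and> j = b then e else 0) * (x::pt)$1 ^ i * x$2 ^ j) = e * x$1 ^ a * x$2 ^ b"
proof -
  have "(\<Sum>j\<le>n - i. (if i = a \<and> j = b then e else 0) * x$1 ^ i * x$2 ^ j) = (if i = a then e * x$1 ^ a * x$2 ^ b else 0)" for i
  proof (cases "i = a")
    case True
    have "(\<Sum>j\<le>n - i. (if i = a \<and> j = b then e else 0) * x$1 ^ i * x$2 ^ j) = (\<Sum>j\<le>n - a. if j = b then e * x$1 ^ a * x$2 ^ b else 0)"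
      using True by (intro sum.cong) auto
    also have "\<dots> = e * x$1 ^ a * x$2 ^ b" using assms by (simp add: sum.delta)
    finally show ?thesis using True by simp
  qed simp
  then have "(\<Sum>i\<le>n. \<Sum>j\<le>n - i. (if i = a \<and> j = b then e else 0) * x$1 ^ i * x$2 ^ j) = (\<Sum>i\<le>n. if i = a then e * x$1 ^ a * x$2 ^ b else 0)"
    by (intro sum.cong) auto
  also have "\<dots> = e * x$1 ^ a * x$2 ^ b" using assms by (simp add: sum.delta)
  finally show ?thesis .
qed

lemma Q_list_poly2: "\<forall>t\<in>set L. fst (snd t) + snd (snd t) \<le> n \<Longrightarrow>
   \<exists>c. \<forall>x. (\<Sum>t\<leftarrow>L. tm t x) = (\<Sum>i\<le>n. \<Sum>j\<le>n - i. c i j * x$1 ^ i * x$2 ^ j)"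
proof (induction L)
  case Nil
  show ?case by (rule exI[of _ "\<lambda>i j. 0"]) simp
next
  case (Cons t L)
  then obtain c where c: "\<forall>x. (\<Sum>t\<leftarrow>L. tm t x) = (\<Sum>i\<le>n. \<Sum>j\<le>n - i. c i j * x$1 ^ i * x$2 ^ j)"
    by auto
  obtain e a b where t: "t = (e, a, b)" by (cases t) auto
  have ab: "a + b \<le> n" using Cons.prems t by auto
  show ?case
  proof (intro exI allI)
    fix x :: pt
    have "(\<Sum>i\<le>n. \<Sum>j\<le>n - i. (c i j + (if i = a \<and> j = b then e else 0)) * x$1 ^ i * x$2 ^ j)
      = (\<Sum>i\<le>n. \<Sum>j\<le>n - i. c i j * x$1 ^ i * x$2 ^ j) + (\<Sum>i\<le>n. \<Sum>j\<le>n - i. (if i = a \<and> j = b then e else 0) * x$1 ^ i * x$2 ^ j)"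
      by (simp add: distrib_right sum.distrib)
    also have "\<dots> = (\<Sum>t\<leftarrow>L. tm t x) + tm t x"
      using c delta_tri[OF ab] by (simp add: t tm_def)
    finally show "(\<Sum>t\<leftarrow>t # L. tm t x) = (\<Sum>i\<le>n. \<Sum>j\<le>n - i. (c i j + (if i = a \<and> j = b then e else 0)) * x$1 ^ i * x$2 ^ j)"
      by simp
  qed
qed

lemma Q_poly2: "Q n f \<Longrightarrow> f \<in> poly2 n"
proof -
  assume "Q n f"
  then obtain L where L1: "\<forall>t\<in>set L. fst (snd t) + snd (snd t) \<le> n"
     and L2: "\<forall>x. f x = (\<Sum>t\<leftarrow>L. tm t x)"
    unfolding Q_def by blast
  obtain c where "\<forall>x. (\<Sum>t\<leftarrow>L. tm t x) = (\<Sum>i\<le>n. \<Sum>j\<le>n - i. c i j * x$1 ^ i * x$2 ^ j)"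
    using Q_list_poly2[OF L1] by blast
  then show ?thesis unfolding poly2_def using L2 by auto
qed

lemma poly2_iff_Q: "f \<in> poly2 n \<longleftrightarrow> Q n f"
  using poly2_Q Q_poly2 by blast

lemma homsum_Q: "f \<in> homsum2 a b \<Longrightarrow> Q b f"
proof -
  assume "f \<in> homsum2 a b"
  then obtain c where c: "\<And>x. f x = (\<Sum>i\<in>{a..b}. \<Sum>j\<le>i. c i j * x$1 ^ j * x$2 ^ (i - j))"
    unfolding homsum2_def by blast
  have "Q b (\<lambda>x. \<Sum>i\<in>{a..b}. \<Sum>j\<le>i. c i j * x$1 ^ j * x$2 ^ (i - j))"
  proof (intro Q_sum)
    fix i j assume i: "i \<in> {a..b}" and j: "j \<in> {..i}"
    have "Q (j + (i - j)) (\<lambda>x. c i j * (x$1 ^ j * x$2 ^ (i - j)))" by (intro Q_scale Q_mon)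
    then have "Q b (\<lambda>x. c i j * (x$1 ^ j * x$2 ^ (i - j)))" by (rule Q_mono) (use i j in auto)
    then show "Q b (\<lambda>x. c i j * x$1 ^ j * x$2 ^ (i - j))" by (rule Q_cong) (simp add: mult.assoc)
  qed auto
  then show ?thesis by (rule Q_cong) (simp add: c)
qed



abbreviation e1 :: pt where "e1 \<equiv> axis 1 1"
abbreviation e2 :: pt where "e2 \<equiv> axis 2 1"

lemma pt_decomp: "(y::pt) = y$1 *\<^sub>R e1 + y$2 *\<^sub>R e2"
  by (simp add: vec_eq_iff forall_2 axis_def)

lemma inv_inj: assumes "invertible B" "B *v v = 0" shows "(v::pt) = 0"
proof -
  obtain A' where "A' ** B = mat 1" using assms(1) unfolding invertible_def by blast
  then have "v = A' *v (B *v v)" by (simp add: matrix_vector_mul_assoc)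
  then show ?thesis using assms(2) by simp
qed

lemma inv_affine:
  assumes "invertible (B::real^2^2)"
  obtains A' where "\<And>x. B *v (A' *v (x - c)) + c = x" "\<And>y. A' *v ((B *v y + c) - c) = y"
proof -
  obtain A' where A: "A' ** B = mat 1" "B ** A' = mat 1" using assms unfolding invertible_def by blast
  show ?thesis
  proof
    show "B *v (A' *v (x - c)) + c = x" for x using A by (simp add: matrix_vector_mul_assoc)
    show "A' *v ((B *v y + c) - c) = y" for y using A by (simp add: matrix_vector_mul_assoc)
  qed
qed

lemma affine_indep3:
  fixes B :: "real^2^2" and c :: pt
  assumes "invertible B"
  defines "p0 \<equiv> c" and "p1 \<equiv> B *v e1 + c" and "p2 \<equiv> B *v e2 + c"
  shows "\<not> affine_dependent {p0, p1, p2}" "p0 \<noteq> p1" "p0 \<noteq> p2" "p1 \<noteq> p2"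
proof -
  have ne: "e1 \<noteq> (0::pt)" "e2 \<noteq> (0::pt)" "e1 - e2 \<noteq> (0::pt)"
    by (auto simp: vec_eq_iff forall_2 axis_def)
  show d01: "p0 \<noteq> p1"
  proof
    assume "p0 = p1" then have "B *v e1 = 0" by (simp add: p0_def p1_def)
    then show False using inv_inj[OF assms(1)] ne by blast
  qed
  show d02: "p0 \<noteq> p2"
  proof
    assume "p0 = p2" then have "B *v e2 = 0" by (simp add: p0_def p2_def)
    then show False using inv_inj[OF assms(1)] ne by blast
  qed
  show d12: "p1 \<noteq> p2"
  proof
    assume "p1 = p2" then have "B *v (e1 - e2) = 0" by (simp add: p1_def p2_def matrix_vector_mult_diff_distrib)
    then show False using inv_inj[OF assms(1)] ne by blast
  qed
  show "\<not> affine_dependent {p0, p1, p2}"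
  proof
    assume "affine_dependent {p0, p1, p2}"
    then obtain U where U: "sum U {p0, p1, p2} = 0" "\<exists>v\<in>{p0, p1, p2}. U v \<noteq> 0"
      "(\<Sum>v\<in>{p0, p1, p2}. U v *\<^sub>R v) = 0"
      by (auto simp: affine_dependent_explicit_finite)
    have s: "U p0 + U p1 + U p2 = 0" using U(1) d01 d02 d12 by simp
    have "U p0 *\<^sub>R p0 + U p1 *\<^sub>R p1 + U p2 *\<^sub>R p2 = 0" using U(3) d01 d02 d12 by (simp add: add.assoc)
    then have "(U p0 + U p1 + U p2) *\<^sub>R c + B *v (U p1 *\<^sub>R e1 + U p2 *\<^sub>R e2) = 0"
      by (simp add: p0_def p1_def p2_def algebra_simps matrix_vector_right_distrib matrix_vector_mult_scaleR scaleR_add_left)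
    then have "B *v (U p1 *\<^sub>R e1 + U p2 *\<^sub>R e2) = 0" using s by simp
    then have "U p1 *\<^sub>R e1 + U p2 *\<^sub>R e2 = 0" using inv_inj[OF assms(1)] by blast
    then have "U p1 = 0" "U p2 = 0" by (auto simp: vec_eq_iff forall_2 axis_def)
    then have "U p0 = 0" using s by simp
    with U(2) \<open>U p1 = 0\<close> \<open>U p2 = 0\<close> show False by auto
  qed
qed

lemma image_affine_hull:
  fixes B :: "real^2^2" and c :: pt and S :: "pt set"
  shows   "(\<lambda>x. B *v x + c) ` (convex hull S) = convex hull ((\<lambda>x. B *v x + c) ` S)"
proof -
  have eq: "(\<lambda>x. B *v x + c) ` T = (\<lambda>x. c + x) ` ((\<lambda>x. B *v x) ` T)" for T
    by (auto simp: image_image add.commute)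
  have lin: "(\<lambda>x. B *v x) ` (convex hull S) = convex hull ((\<lambda>x. B *v x) ` S)"
    by (rule convex_hull_linear_image) (rule matrix_vector_mul_linear)
  show ?thesis
    unfolding eq convex_hull_translation lin ..
qed

lemma verts_image:
  fixes B :: "real^2^2"
  assumes "invertible B" "K = (\<lambda>x. B *v x + c) ` ref_tri"
  shows "verts K = {c, B *v e1 + c, B *v e2 + c}"
proof -
  have "K = convex hull {c, B *v e1 + c, B *v e2 + c}"
    using assms(2) unfolding ref_tri_def image_affine_hull by simp
  then show ?thesis unfolding verts_def
    using extreme_point_of_convex_hull_affine_independent[OF affine_indep3(1)[OF assms(1)]]
    by auto
qed

definition b0 :: "pt \<Rightarrow> real" where "b0 y = (1 - y$1 - y$2) * y$1 * y$2"

lemma bary_image: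
  fixes B :: "real^2^2" and c y :: pt
  assumes "invertible B" "K = (\<lambda>x. B *v x + c) ` ref_tri"
  defines "p0 \<equiv> c" and "p1 \<equiv> B *v e1 + c" and "p2 \<equiv> B *v e2 + c"
  defines "l \<equiv> (\<lambda>w. if w = p0 then 1 - y$1 - y$2 else if w = p1 then y$1 else if w = p2 then y$2 else 0)"
  shows "bary K w (B *v y + c) = l w"
proof -
  have V: "verts K = {p0, p1, p2}" using verts_image[OF assms(1,2)] by (simp add: p0_def p1_def p2_def)
  note ind = affine_indep3[OF assms(1), of c, folded p0_def p1_def p2_def]
  define P where "P l' \<longleftrightarrow> (\<forall>w. w \<notin> verts K \<longrightarrow> l' w = 0) \<and> (\<Sum>w\<in>verts K. l' w) = 1 \<and>
                        (\<Sum>w\<in>verts K. l' w *\<^sub>R w) = B *v y + c" for l'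
  have Pl: "P l"
  proof -
    have "(\<Sum>w\<in>verts K. l w *\<^sub>R w) = (1 - y$1 - y$2) *\<^sub>R c + y$1 *\<^sub>R (B *v e1 + c) + y$2 *\<^sub>R (B *v e2 + c)"
      using ind by (simp add: V l_def p0_def p1_def p2_def)
    also have "\<dots> = B *v (y$1 *\<^sub>R e1 + y$2 *\<^sub>R e2) + c"
      by (simp add: algebra_simps matrix_vector_right_distrib matrix_vector_mult_scaleR)
    also have "\<dots> = B *v y + c" using pt_decomp[of y] by simp
    finally show ?thesis unfolding P_def using ind by (auto simp: V l_def)
  qed
  have uniq: "l' = l" if "P l'" for l'
  proof
    fix w
    show "l' w = l w"
    proof (cases "w \<in> verts K")
      case False then show ?thesis using that Pl unfolding P_def by auto
    next
      case True
      define U where "U v = l' v - l v" for v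
      have "sum U (verts K) = 0" using that Pl unfolding P_def U_def by (simp add: sum_subtractf)
      moreover have "(\<Sum>v\<in>verts K. U v *\<^sub>R v) = 0"
        using that Pl unfolding P_def U_def by (simp add: scaleR_diff_left sum_subtractf)
      ultimately have "\<forall>v\<in>verts K. U v = 0"
        using ind(1) unfolding V by (auto simp: affine_dependent_explicit_finite)
      then show ?thesis using True by (simp add: U_def)
    qed
  qed
  have "(THE l'. P l') = l" using Pl uniq by (rule the_equality)
  then show ?thesis unfolding bary_def P_def by simp
qed

lemma bary_image3:
  fixes B :: "real^2^2" and c y :: pt
  assumes "invertible B" "K = (\<lambda>x. B *v x + c) ` ref_tri"
  shows "bary K c (B *v y + c) = 1 - y$1 - y$2" "bary K (B *v e1 + c) (B *v y + c) = y$1"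
    "bary K (B *v e2 + c) (B *v y + c) = y$2"
proof -
  note ind = affine_indep3[OF assms(1), of c]
  show "bary K c (B *v y + c) = 1 - y$1 - y$2"
    using bary_image[OF assms, where w = c and y = y] by simp
  show "bary K (B *v e1 + c) (B *v y + c) = y$1"
    using bary_image[OF assms, where w = "B *v e1 + c" and y = y] ind by auto
  show "bary K (B *v e2 + c) (B *v y + c) = y$2"
    using bary_image[OF assms, where w = "B *v e2 + c" and y = y] ind by auto
qed

lemma bubble_image:
  fixes B :: "real^2^2"
  assumes "invertible B" "K = (\<lambda>x. B *v x + c) ` ref_tri"
  shows "bubble K (B *v y + c) = b0 y"
proof -
  have V: "verts K = {c, B *v e1 + c, B *v e2 + c}" using verts_image[OF assms(1,2)] .
  note ind = affine_indep3[OF assms(1), of c]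
  note br = bary_image3[OF assms(1,2), of y]
  show ?thesis unfolding bubble_def V using ind by (simp add: br b0_def mult.assoc)
qed

lemma Q_b0: "Q 3 b0"
proof -
  have "Q (1 + 1 + 1) (\<lambda>y. (1 + (-1) * y$1 + (-1) * y$2) * y$1 * y$2)"
    by (intro Q_mult Q_add Q_const Q_scale Q_x1 Q_x2)
  then have "Q 3 (\<lambda>y. (1 + (-1) * y$1 + (-1) * y$2) * y$1 * y$2)" by (simp add: numeral_3_eq_3)
  then show ?thesis by (rule Q_cong) (simp add: b0_def)
qed



definition affel :: "real^2^2 \<Rightarrow> pt \<Rightarrow> real^2^2 \<Rightarrow> pt set \<Rightarrow> bool" where
  "affel B c A' K \<longleftrightarrow> invertible B \<and> K = (\<lambda>x. B *v x + c) ` ref_tri \<and>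
     (\<forall>x. B *v (A' *v (x - c)) + c = x) \<and> (\<forall>y. A' *v (B *v y) = y)"

lemma affel_exists:
  assumes "invertible B" "K = (\<lambda>x. B *v x + c) ` ref_tri"
  shows "\<exists>A'. affel B c A' K"
proof -
  obtain A' where A: "A' ** B = mat 1" "B ** A' = mat 1" using assms(1) unfolding invertible_def by blast
  have "affel B c A' K" unfolding affel_def using assms A by (simp add: matrix_vector_mul_assoc)
  then show ?thesis by blast
qed

lemma affel_GF: "affel B c A' K \<Longrightarrow> A' *v ((B *v y + c) - c) = y"
  unfolding affel_def by simp

lemma affel_FG: "affel B c A' K \<Longrightarrow> B *v (A' *v (x - c)) + c = x"
  unfolding affel_def by simp

lemma bubble_G: "affel B c A' K \<Longrightarrow> bubble K x = b0 (A' *v (x - c))"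
  using bubble_image[of B K c "A' *v (x - c)"] unfolding affel_def by simp

lemma Q_G: "Q n f \<Longrightarrow> Q n (\<lambda>x. f (A' *v (x - c)))"
proof -
  assume "Q n f"
  then have "Q n (\<lambda>x. f (A' *v x + (- (A' *v c))))" by (rule Q_comp_affine)
  then show ?thesis by (rule Q_cong) (simp add: matrix_vector_mult_diff_distrib)
qed

definition Pkk0 :: "nat \<Rightarrow> nat \<Rightarrow> (pt \<Rightarrow> real) set" where
  "Pkk0 k k' = {(\<lambda>x. p x + b0 x * q x) | p q. p \<in> poly2 k \<and> q \<in> poly2 (k' - 3)}"

lemma PkkI: "p \<in> poly2 k \<Longrightarrow> q \<in> poly2 (k' - 3) \<Longrightarrow> (\<And>x. f x = p x + bubble K x * q x) \<Longrightarrow> f \<in> Pkk k k' K"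
  unfolding Pkk_def by (rule CollectI, rule exI[of _ p], rule exI[of _ q]) auto

lemma Pkk0I: "p \<in> poly2 k \<Longrightarrow> q \<in> poly2 (k' - 3) \<Longrightarrow> (\<And>x. f x = p x + b0 x * q x) \<Longrightarrow> f \<in> Pkk0 k k'"
  unfolding Pkk0_def by (rule CollectI, rule exI[of _ p], rule exI[of _ q]) auto

lemma Pkk_Q:
  assumes "affel B c A' K" "3 \<le> k'" "k \<le> k'" "f \<in> Pkk k k' K"
  shows "Q k' f"
proof -
  obtain p q where f: "f = (\<lambda>x. p x + bubble K x * q x)" and p: "p \<in> poly2 k" and q: "q \<in> poly2 (k' - 3)"
    using assms(4) unfolding Pkk_def by blast
  have "Q 3 (\<lambda>x. b0 (A' *v (x - c)))" by (rule Q_G[OF Q_b0])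
  then have bq: "Q 3 (bubble K)" by (rule Q_cong) (simp add: bubble_G[OF assms(1)])
  have "Q (3 + (k' - 3)) (\<lambda>x. bubble K x * q x)" by (rule Q_mult[OF bq poly2_Q[OF q]])
  then have "Q k' (\<lambda>x. bubble K x * q x)" using assms(2) by simp
  moreover have "Q k' p" using Q_mono[OF poly2_Q[OF p] assms(3)] .
  ultimately show ?thesis unfolding f by (intro Q_add)
qed

lemma Pkk_pull:
  assumes "affel B c A' K" "f \<in> Pkk k k' K"
  shows "(\<lambda>y. f (B *v y + c)) \<in> Pkk0 k k'"
proof -
  obtain p q where f: "f = (\<lambda>x. p x + bubble K x * q x)" and p: "p \<in> poly2 k" and q: "q \<in> poly2 (k' - 3)"
    using assms(2) unfolding Pkk_def by blast
  have p': "(\<lambda>y. p (B *v y + c)) \<in> poly2 k" using Q_comp_affine[OF poly2_Q[OF p]] by (simp add: poly2_iff_Q)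
  have q': "(\<lambda>y. q (B *v y + c)) \<in> poly2 (k' - 3)" using Q_comp_affine[OF poly2_Q[OF q]] by (simp add: poly2_iff_Q)
  have "bubble K (B *v y + c) = b0 y" for y
    using bubble_image[of B K c y] assms(1) unfolding affel_def by simp
  then show ?thesis by (intro Pkk0I[OF p' q']) (simp add: f)
qed

lemma Pkk_push:
  assumes "affel B c A' K" "g \<in> Pkk0 k k'"
  shows "(\<lambda>x. g (A' *v (x - c))) \<in> Pkk k k' K"
proof -
  obtain p q where g: "g = (\<lambda>x. p x + b0 x * q x)" and p: "p \<in> poly2 k" and q: "q \<in> poly2 (k' - 3)"
    using assms(2) unfolding Pkk0_def by blast
  have p': "(\<lambda>x. p (A' *v (x - c))) \<in> poly2 k" using Q_G[OF poly2_Q[OF p]] by (simp add: poly2_iff_Q)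
  have q': "(\<lambda>x. q (A' *v (x - c))) \<in> poly2 (k' - 3)" using Q_G[OF poly2_Q[OF q]] by (simp add: poly2_iff_Q)
  show ?thesis by (intro PkkI[OF p' q']) (simp add: g bubble_G[OF assms(1)])
qed

lemma poly2_zero: "(\<lambda>x. 0) \<in> poly2 n" by (simp add: poly2_iff_Q Q_zero)
lemma poly2_add: "p \<in> poly2 n \<Longrightarrow> q \<in> poly2 n \<Longrightarrow> (\<lambda>x. p x + q x) \<in> poly2 n"
  by (simp add: poly2_iff_Q Q_add)
lemma poly2_scale: "p \<in> poly2 n \<Longrightarrow> (\<lambda>x. a * p x) \<in> poly2 n"
  by (simp add: poly2_iff_Q Q_scale)

lemma Pkk_zero: "(\<lambda>x. 0) \<in> Pkk k k' K"
  by (rule PkkI[OF poly2_zero poly2_zero]) simp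

lemma Pkk_add: assumes "f \<in> Pkk k k' K" "g \<in> Pkk k k' K" shows "(\<lambda>x. f x + g x) \<in> Pkk k k' K"
proof -
  obtain p q where f: "f = (\<lambda>x. p x + bubble K x * q x)" and p: "p \<in> poly2 k" and q: "q \<in> poly2 (k' - 3)"
    using assms(1) unfolding Pkk_def by blast
  obtain p' q' where g: "g = (\<lambda>x. p' x + bubble K x * q' x)" and p': "p' \<in> poly2 k" and q': "q' \<in> poly2 (k' - 3)"
    using assms(2) unfolding Pkk_def by blast
  show ?thesis by (rule PkkI[OF poly2_add[OF p p'] poly2_add[OF q q']]) (simp add: f g algebra_simps)
qed

lemma Pkk_scale: assumes "f \<in> Pkk k k' K" shows "(\<lambda>x. a * f x) \<in> Pkk k k' K"
proof -
  obtain p q where f: "f = (\<lambda>x. p x + bubble K x * q x)" and p: "p \<in> poly2 k" and q: "q \<in> poly2 (k' - 3)"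
    using assms(1) unfolding Pkk_def by blast
  show ?thesis by (rule PkkI[OF poly2_scale[OF p] poly2_scale[OF q]]) (simp add: f algebra_simps)
qed

lemma Pkk_sum: "finite A \<Longrightarrow> (\<And>a. a \<in> A \<Longrightarrow> f a \<in> Pkk k k' K) \<Longrightarrow> (\<lambda>x. \<Sum>a\<in>A. f a x) \<in> Pkk k k' K"
  by (induction A rule: finite_induct) (auto intro: Pkk_zero Pkk_add)

lemma unisolvent_eq:
  assumes "unisolvent V nd r" "p1 \<in> V" "p2 \<in> V" "\<forall>i<r. p1 (nd i) = p2 (nd i)"
  shows "p1 = p2"
proof -
  have u: "\<exists>!p. p \<in> V \<and> (\<forall>i<r. p (nd i) = p1 (nd i))"
    using spec[OF assms(1)[unfolded unisolvent_def], of "\<lambda>i. p1 (nd i)"] by simp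
  from u obtain q where "\<forall>y. y \<in> V \<and> (\<forall>i<r. y (nd i) = p1 (nd i)) \<longrightarrow> y = q"
    by (auto elim: ex1E)
  then show ?thesis using assms(2-4) by metis
qed

definition phihat :: "nat \<Rightarrow> nat \<Rightarrow> (nat \<Rightarrow> pt) \<Rightarrow> nat \<Rightarrow> nat \<Rightarrow> pt \<Rightarrow> real" where
  "phihat k k' xh r i = (THE p. p \<in> Pkk0 k k' \<and> (\<forall>j<r. p (xh j) = (if j = i then 1 else 0)))"

lemma phihat_prop:
  assumes "affel B c A' K" "unisolvent (Pkk k k' K) (\<lambda>i. B *v xh i + c) r"
  shows "phihat k k' xh r i \<in> Pkk0 k k' \<and> (\<forall>j<r. phihat k k' xh r i (xh j) = (if j = i then 1 else 0))"
proof -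
  let ?d = "\<lambda>j. if j = i then 1 else (0::real)"
  have "\<exists>!p. p \<in> Pkk k k' K \<and> (\<forall>j<r. p (B *v xh j + c) = ?d j)"
    using spec[OF assms(2)[unfolded unisolvent_def], of ?d] by simp
  from ex1_implies_ex[OF this] obtain pK where pK0: "pK \<in> Pkk k k' K \<and> (\<forall>j<r. pK (B *v xh j + c) = ?d j)"
    by blast
  then have pK: "pK \<in> Pkk k k' K" "\<forall>j<r. pK (B *v xh j + c) = ?d j" by auto
  define psi where "psi = (\<lambda>y. pK (B *v y + c))"
  have psi: "psi \<in> Pkk0 k k' \<and> (\<forall>j<r. psi (xh j) = ?d j)"
    using Pkk_pull[OF assms(1) pK(1)] pK(2) unfolding psi_def by simp
  have uniq: "p' = psi" if "p' \<in> Pkk0 k k' \<and> (\<forall>j<r. p' (xh j) = ?d j)" for p'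
  proof -
    have "(\<lambda>x. p' (A' *v (x - c))) = pK"
    proof (rule unisolvent_eq[OF assms(2) Pkk_push[OF assms(1)] pK(1)])
      show "p' \<in> Pkk0 k k'" using that by blast
      show "\<forall>j<r. p' (A' *v ((B *v xh j + c) - c)) = pK (B *v xh j + c)"
        using that pK(2) affel_GF[OF assms(1)] by simp
    qed
    then have "(\<lambda>y. p' (A' *v ((B *v y + c) - c))) = psi" unfolding psi_def by (simp only: fun_eq_iff) simp
    then show ?thesis using affel_GF[OF assms(1)] by simp
  qed
  have "phihat k k' xh r i = psi" unfolding phihat_def
    by (rule the_equality) (use psi uniq in blast)+
  then show ?thesis using psi by simp
qed

lemma lagrange_K:
  assumes "affel B c A' K" "unisolvent (Pkk k k' K) (\<lambda>i. B *v xh i + c) r"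
  shows "(\<lambda>x. phihat k k' xh r i (A' *v (x - c))) \<in> Pkk k k' K"
    "\<forall>j<r. phihat k k' xh r i (A' *v ((B *v xh j + c) - c)) = (if j = i then 1 else 0)"
  using phihat_prop[OF assms, of i] Pkk_push[OF assms(1)] affel_GF[OF assms(1)] by auto

lemma expand_K:
  assumes "affel B c A' K" "unisolvent (Pkk k k' K) (\<lambda>i. B *v xh i + c) r" "p \<in> Pkk k k' K"
  shows "p = (\<lambda>x. \<Sum>j<r. p (B *v xh j + c) * phihat k k' xh r j (A' *v (x - c)))"
proof (rule unisolvent_eq[OF assms(2) assms(3)])
  show "(\<lambda>x. \<Sum>j<r. p (B *v xh j + c) * phihat k k' xh r j (A' *v (x - c))) \<in> Pkk k k' K"
    by (intro Pkk_sum Pkk_scale lagrange_K(1)[OF assms(1,2)]) simp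
  show "\<forall>i<r. p (B *v xh i + c) = (\<Sum>j<r. p (B *v xh j + c) * phihat k k' xh r j (A' *v ((B *v xh i + c) - c)))"
  proof (intro allI impI)
    fix i assume "i < r"
    have "(\<Sum>j<r. p (B *v xh j + c) * phihat k k' xh r j (A' *v ((B *v xh i + c) - c)))
       = (\<Sum>j<r. if j = i then p (B *v xh j + c) else 0)"
      using lagrange_K(2)[OF assms(1,2)] \<open>i < r\<close> by (intro sum.cong) auto
    also have "\<dots> = p (B *v xh i + c)" using \<open>i < r\<close> by simp
    finally show "p (B *v xh i + c) = (\<Sum>j<r. p (B *v xh j + c) * phihat k k' xh r j (A' *v ((B *v xh i + c) - c)))" by simp
  qed
qed



lemma cont_abs_int:
  fixes f :: "pt \<Rightarrow> 'b::euclidean_space"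
  assumes "compact S" "continuous_on S f" shows "f absolutely_integrable_on S"
proof -
  have "integrable lborel (\<lambda>x. indicator S x *\<^sub>R f x)" by (rule borel_integrable_compact[OF assms])
  then show ?thesis unfolding set_integrable_def
    by (simp add: integrable_completion borel_measurable_integrable)
qed

lemma cont_int:
  fixes f :: "pt \<Rightarrow> real"
  assumes "compact S" "continuous_on S f" shows "f integrable_on S"
  using cont_abs_int[OF assms] by (simp add: absolutely_integrable_on_def)

lemma compact_ref: "compact ref_tri"
  unfolding ref_tri_def by (rule finite_imp_compact_convex_hull) simp

lemma bl_mv: "bounded_linear (\<lambda>y::pt. (B::real^2^2) *v y)"
  by (simp add: linear_conv_bounded_linear[symmetric])

lemma cont_aff: "continuous_on S (\<lambda>y::pt. (B::real^2^2) *v y + c)"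
  by (intro continuous_on_add continuous_on_const linear_continuous_on bl_mv)

lemma affel_compact: "affel B c A' K \<Longrightarrow> compact K"
  unfolding affel_def using compact_continuous_image[OF cont_aff compact_ref] by simp

lemma int_scale1: "f integrable_on S \<Longrightarrow> integral S (\<lambda>x. f x *\<^sub>R (1::real^1)) = integral S f *\<^sub>R 1"
  using integral_linear[OF _ bounded_linear_scaleR_left, of f S "1::real^1"] by (simp add: o_def)

lemma cov:
  assumes el: "affel B c A' K" and h: "continuous_on UNIV h"
  shows "integral K h = \<bar>det B\<bar> * integral ref_tri (\<lambda>y. h (B *v y + c))"
proof -
  let ?F = "\<lambda>x. B *v x + c"
  let ?f = "\<lambda>x. h x *\<^sub>R (1::real^1)"
  have K: "K = ?F ` ref_tri" using el unfolding affel_def by simp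
  have meas: "ref_tri \<in> sets lebesgue" using lmeasurable_compact[OF compact_ref] by (rule fmeasurableD)
  have der: "(?F has_derivative (\<lambda>v. B *v v)) (at x within ref_tri)" for x
    by (simp add: bounded_linear_imp_has_derivative has_derivative_add_const)
  have inj: "inj_on ?F ref_tri"
    by (rule inj_onI) (metis affel_GF[OF el])
  have hK: "continuous_on K h" using h continuous_on_subset by blast
  have habs: "?f absolutely_integrable_on (?F ` ref_tri)"
    unfolding K[symmetric] by (rule cont_abs_int[OF affel_compact[OF el]]) (intro continuous_intros hK)
  have "integral (?F ` ref_tri) ?f = integral ref_tri (\<lambda>x. \<bar>det (matrix (\<lambda>v. B *v v))\<bar> *\<^sub>R ?f (?F x))"
    by (rule integral_change_of_variables[OF meas der inj]) (use habs in blast)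
  then have eq: "integral K ?f = integral ref_tri (\<lambda>x. \<bar>det B\<bar> *\<^sub>R ?f (?F x))" using K by simp
  have hF: "continuous_on ref_tri (\<lambda>y. h (B *v y + c))"
    by (rule continuous_on_compose2[OF h cont_aff]) auto
  have i1: "h integrable_on K" by (rule cont_int[OF affel_compact[OF el] hK])
  have i2: "(\<lambda>y. h (B *v y + c)) integrable_on ref_tri" by (rule cont_int[OF compact_ref hF])
  have "integral K h *\<^sub>R (1::real^1) = (\<bar>det B\<bar> * integral ref_tri (\<lambda>y. h (B *v y + c))) *\<^sub>R 1"
  proof -
    have "integral K h *\<^sub>R (1::real^1) = integral K ?f" using int_scale1[OF i1] by simp
    also have "\<dots> = integral ref_tri (\<lambda>x. \<bar>det B\<bar> *\<^sub>R ?f (?F x))" by (rule eq)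
    also have "\<dots> = \<bar>det B\<bar> *\<^sub>R integral ref_tri (\<lambda>x. h (?F x) *\<^sub>R (1::real^1))" by (rule integral_cmul)
    also have "\<dots> = (\<bar>det B\<bar> * integral ref_tri (\<lambda>y. h (B *v y + c))) *\<^sub>R 1"
      using int_scale1[OF i2] by simp
    finally show ?thesis .
  qed
  then show ?thesis by (simp add: scaleR_cancel_right)
qed



definition aa :: "nat \<Rightarrow> nat \<Rightarrow> (nat \<Rightarrow> pt) \<Rightarrow> nat \<Rightarrow> nat \<Rightarrow> real" where
  "aa k k' xh r j = integral ref_tri (phihat k k' xh r j)"
definition bb :: "nat \<Rightarrow> nat \<Rightarrow> (nat \<Rightarrow> pt) \<Rightarrow> nat \<Rightarrow> nat \<Rightarrow> real" where
  "bb k k' xh r j = integral ref_tri (\<lambda>y. (phihat k k' xh r j y)\<^sup>2)"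
definition Mc :: "nat \<Rightarrow> nat \<Rightarrow> (nat \<Rightarrow> pt) \<Rightarrow> nat \<Rightarrow> real" where
  "Mc k k' xh r = 1 + (\<Sum>j<r. \<bar>bb k k' xh r j / aa k k' xh r j\<bar>)"

lemma Mc_ge: "j < r \<Longrightarrow> \<bar>bb k k' xh r j / aa k k' xh r j\<bar> \<le> Mc k k' xh r"
proof -
  assume "j < r"
  then have "\<bar>bb k k' xh r j / aa k k' xh r j\<bar> \<le> (\<Sum>j<r. \<bar>bb k k' xh r j / aa k k' xh r j\<bar>)"
    by (intro member_le_sum) auto
  then show ?thesis unfolding Mc_def by simp
qed

lemma Mc_pos: "Mc k k' xh r > 0"
  unfolding Mc_def by (simp add: add_pos_nonneg sum_nonneg)

lemma int_K: fixes h :: "pt \<Rightarrow> real" assumes "affel B c A' K" "continuous_on UNIV h" shows "h integrable_on K"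
  by (rule cont_int[OF affel_compact[OF assms(1)] continuous_on_subset[OF assms(2) subset_UNIV]])

lemma scalar_est:
  assumes el: "affel B c A' K"
    and uni: "unisolvent (Pkk k k' K) (\<lambda>i. B *v xh i + c) r"
    and B2: "\<forall>g\<in>poly2 (k + k' - 2). (\<Sum>i<r. w i * g (B *v xh i + c)) = integral K g"
    and B1: "\<forall>i<r. w i > 0"
    and kk: "3 \<le> k" "k < k'"
    and p: "p \<in> Pkk k k' K"
  shows "integral K (\<lambda>x. (p x)\<^sup>2) \<le> real r * Mc k k' xh r * (\<Sum>i<r. w i * (p (B *v xh i + c))\<^sup>2)"
proof -
  define phi where "phi j x = phihat k k' xh r j (A' *v (x - c))" for j x
  define ch where "ch i = B *v xh i + c" for i
  define cc where "cc j = p (ch j)" for j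
  define M where "M = Mc k k' xh r"
  have phiP: "phi j \<in> Pkk k k' K" for j
    unfolding phi_def using lagrange_K(1)[OF el uni] .
  have phiQ: "Q k' (phi j)" for j using Pkk_Q[OF el _ _ phiP] kk by simp
  have phic: "continuous_on UNIV (phi j)" for j using Q_continuous[OF phiQ] .
  have phid: "phi j (ch i) = (if i = j then 1 else 0)" if "i < r" for i j
    using lagrange_K(2)[OF el uni, of j] that unfolding phi_def ch_def by simp
  have phiF: "phi j (B *v y + c) = phihat k k' xh r j y" for j y
    unfolding phi_def using affel_GF[OF el] by simp
  have phipoly: "phi j \<in> poly2 (k + k' - 2)" for j
    using Q_poly2[OF Q_mono[OF phiQ]] kk by simp
  have w_eq: "w j = \<bar>det B\<bar> * aa k k' xh r j" if "j < r" for j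
  proof -
    have "(\<Sum>i<r. w i * phi j (ch i)) = w j"
      using that by (simp add: phid if_distrib sum.delta cong: if_cong)
    moreover have "(\<Sum>i<r. w i * phi j (ch i)) = integral K (phi j)"
      using B2 phipoly unfolding ch_def by blast
    moreover have "integral K (phi j) = \<bar>det B\<bar> * aa k k' xh r j"
      unfolding cov[OF el phic] aa_def phiF by simp
    ultimately show ?thesis by simp
  qed
  have sq_eq: "integral K (\<lambda>x. (phi j x)\<^sup>2) = \<bar>det B\<bar> * bb k k' xh r j" for j
  proof -
    have cc2: "continuous_on UNIV (\<lambda>x. (phi j x)\<^sup>2)" by (intro continuous_intros phic)
    show ?thesis using cov[OF el cc2] by (simp add: bb_def phiF)
  qed
  have bnd: "\<bar>det B\<bar> * bb k k' xh r j \<le> M * w j" if "j < r" for j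
  proof -
    have "0 < w j" using B1 that by blast
    then have "0 < \<bar>det B\<bar> * aa k k' xh r j" using w_eq[OF that] by simp
    then have ap: "aa k k' xh r j > 0" and dp: "\<bar>det B\<bar> > 0"
      by (auto simp: zero_less_mult_iff)
    have "bb k k' xh r j = (bb k k' xh r j / aa k k' xh r j) * aa k k' xh r j" using ap by simp
    also have "\<dots> \<le> M * aa k k' xh r j"
    proof (rule mult_right_mono)
      have "bb k k' xh r j / aa k k' xh r j \<le> \<bar>bb k k' xh r j / aa k k' xh r j\<bar>" by (rule abs_ge_self)
      also have "\<dots> \<le> M" using Mc_ge[OF that, of k k' xh] unfolding M_def .
      finally show "bb k k' xh r j / aa k k' xh r j \<le> M" .
    qed (use ap in simp)
    finally have "bb k k' xh r j \<le> M * aa k k' xh r j" .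
    then have "\<bar>det B\<bar> * bb k k' xh r j \<le> \<bar>det B\<bar> * (M * aa k k' xh r j)"
      using dp by (intro mult_left_mono) auto
    then show ?thesis using w_eq[OF that] by (simp add: algebra_simps)
  qed
  have pexp: "p x = (\<Sum>j<r. cc j * phi j x)" for x
    using fun_cong[OF expand_K[OF el uni p], of x] unfolding cc_def ch_def phi_def by simp
  have pw: "(p x)\<^sup>2 \<le> real r * (\<Sum>j<r. (cc j)\<^sup>2 * (phi j x)\<^sup>2)" for x
  proof -
    have "(p x)\<^sup>2 \<le> (\<Sum>j<r. (cc j * phi j x)\<^sup>2) * card {..<r}"
      unfolding pexp by (rule sum_squared_le_sum_of_squares)
    then show ?thesis by (simp add: power_mult_distrib mult.commute)
  qed
  have ic: "continuous_on UNIV (\<lambda>x. (cc j)\<^sup>2 * (phi j x)\<^sup>2)" for j by (intro continuous_intros phic)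
  have pc: "continuous_on UNIV p" using Q_continuous[OF Pkk_Q[OF el _ _ p]] kk by simp
  have "integral K (\<lambda>x. (p x)\<^sup>2) \<le> integral K (\<lambda>x. real r * (\<Sum>j<r. (cc j)\<^sup>2 * (phi j x)\<^sup>2))"
    by (rule integral_le[OF int_K[OF el] int_K[OF el] pw]) (intro continuous_intros pc phic)+
  also have "\<dots> = real r * (\<Sum>j<r. (cc j)\<^sup>2 * integral K (\<lambda>x. (phi j x)\<^sup>2))"
  proof -
    have "integral K (\<lambda>x. real r * (\<Sum>j<r. (cc j)\<^sup>2 * (phi j x)\<^sup>2)) = real r * integral K (\<lambda>x. \<Sum>j<r. (cc j)\<^sup>2 * (phi j x)\<^sup>2)"
      by simp
    also have "integral K (\<lambda>x. \<Sum>j<r. (cc j)\<^sup>2 * (phi j x)\<^sup>2) = (\<Sum>j<r. integral K (\<lambda>x. (cc j)\<^sup>2 * (phi j x)\<^sup>2))"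
      by (rule integral_sum) (auto intro: int_K[OF el ic])
    also have "\<dots> = (\<Sum>j<r. (cc j)\<^sup>2 * integral K (\<lambda>x. (phi j x)\<^sup>2))"
      by simp
    finally show ?thesis .
  qed
  also have "\<dots> = real r * (\<Sum>j<r. (cc j)\<^sup>2 * (\<bar>det B\<bar> * bb k k' xh r j))"
    by (simp add: sq_eq)
  also have "\<dots> \<le> real r * (\<Sum>j<r. (cc j)\<^sup>2 * (M * w j))"
    by (intro mult_left_mono sum_mono bnd) auto
  also have "\<dots> = real r * M * (\<Sum>i<r. w i * (p (B *v xh i + c))\<^sup>2)"
    by (simp add: sum_distrib_left cc_def ch_def algebra_simps)
  finally show ?thesis unfolding M_def .
qed



lemma L2_bound:
  fixes f :: "pt \<Rightarrow> real" and h :: "pt set \<Rightarrow> pt \<Rightarrow> real"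
  assumes T: "finite T" and cov: "\<Omega> \<subseteq> \<Union>T" and om: "open \<Omega>"
    and K: "\<And>K. K \<in> T \<Longrightarrow> convex K \<and> compact K"
    and hc: "\<And>K. K \<in> T \<Longrightarrow> continuous_on UNIV (h K)"
    and hpos: "\<And>K x. 0 \<le> h K x" and fpos: "\<And>x. 0 \<le> f x"
    and fh: "\<And>K x. K \<in> T \<Longrightarrow> x \<in> interior K \<Longrightarrow> f x = h K x"
  shows "integral\<^sup>L (lebesgue_on \<Omega>) f \<le> (\<Sum>K\<in>T. integral K (h K))"
proof -
  have hi: "h K integrable_on K" if "K \<in> T" for K
    using cont_int[OF conjunct2[OF K[OF that]] continuous_on_subset[OF hc[OF that] subset_UNIV]] .
  have rpos: "0 \<le> (\<Sum>K\<in>T. integral K (h K))"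
    by (intro sum_nonneg integral_nonneg hi hpos)
  show ?thesis
  proof (cases "integrable (lebesgue_on \<Omega>) f")
    case False
    then show ?thesis using rpos by (simp add: not_integrable_integral_eq)
  next
    case True
    have ml: "\<Omega> \<in> sets lebesgue" using om by (simp add: borel_open)
    have hf: "(f has_integral integral\<^sup>L (lebesgue_on \<Omega>) f) \<Omega>"
      by (rule has_integral_integral_lebesgue_on[OF True ml])
    then have eq1: "integral\<^sup>L (lebesgue_on \<Omega>) f = integral \<Omega> f" and fi: "f integrable_on \<Omega>"
      by (auto simp: integral_unique integrable_on_def)
    define N where "N = \<Union>(frontier ` T)"
    have negN: "negligible N" unfolding N_def
      using T K by (intro negligible_Union) (auto intro: negligible_convex_frontier)
    define g1 where "g1 x = (if x \<in> \<Omega> then f x else 0)" for x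
    define g2 where "g2 x = (if x \<in> \<Omega> - N then f x else 0)" for x
    define G where "G x = (\<Sum>K\<in>T. if x \<in> K then h K x else 0)" for x
    have g1i: "g1 integrable_on UNIV" unfolding g1_def using fi
      by (simp add: Henstock_Kurzweil_Integration.integrable_restrict_UNIV)
    have e12: "\<And>x. x \<in> UNIV - N \<Longrightarrow> g2 x = g1 x" unfolding g1_def g2_def by auto
    have g2i: "g2 integrable_on UNIV" by (rule integrable_spike[OF g1i negN e12])
    have ie: "integral UNIV g1 = integral UNIV g2" by (rule integral_spike[OF negN e12])
    have Gi: "G integrable_on UNIV" unfolding G_def
      by (intro integrable_sum T) (simp add: Henstock_Kurzweil_Integration.integrable_restrict_UNIV hi)
    have le: "g2 x \<le> G x" for x
    proof (cases "x \<in> \<Omega> - N")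
      case False
      then show ?thesis unfolding g2_def G_def by (auto intro!: sum_nonneg simp: hpos)
    next
      case True
      then obtain K0 where K0: "K0 \<in> T" "x \<in> K0" using cov by auto
      have "x \<notin> frontier K0" using True K0 unfolding N_def by auto
      moreover have "closed K0" using K[OF K0(1)] compact_imp_closed by blast
      ultimately have xi: "x \<in> interior K0" using K0(2) by (simp add: frontier_def)
      have "g2 x = (if x \<in> K0 then h K0 x else 0)" using True fh[OF K0(1) xi] K0(2) unfolding g2_def by simp
      also have "\<dots> \<le> G x" unfolding G_def
        by (rule member_le_sum[OF K0(1) _ T]) (simp add: hpos)
      finally show ?thesis .
    qed
    have "integral\<^sup>L (lebesgue_on \<Omega>) f = integral UNIV g2"
      using eq1 ie unfolding g1_def by (simp add: Henstock_Kurzweil_Integration.integral_restrict_UNIV)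
    also have "\<dots> \<le> integral UNIV G" by (rule integral_le[OF g2i Gi le])
    also have "\<dots> = (\<Sum>K\<in>T. integral UNIV (\<lambda>x. if x \<in> K then h K x else 0))"
      unfolding G_def
      by (rule integral_sum[OF T]) (simp add: Henstock_Kurzweil_Integration.integrable_restrict_UNIV hi)
    also have "\<dots> = (\<Sum>K\<in>T. integral K (h K))"
      by (simp add: Henstock_Kurzweil_Integration.integral_restrict_UNIV)
    finally show ?thesis .
  qed
qed

lemma frob_sq: "frob X X = (\<Sum>a\<in>UNIV. \<Sum>b\<in>UNIV. (X$a$b)\<^sup>2)"
  unfolding frob_def by (simp add: power2_eq_square)

lemma frob_nonneg: "0 \<le> frob X X"
  unfolding frob_sq by (intro sum_nonneg) auto

lemma frob_scale: "frob (u *\<^sub>R Y) X = u * frob Y X"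
  unfolding frob_def by (simp add: sum_distrib_left mult.assoc)

lemma frob_diff: "frob (Y - Z) X = frob Y X - frob Z X"
  unfolding frob_def by (simp add: sum_subtractf left_diff_distrib)

lemma frob_id: "frob (mat 1) X = tr2 X"
  unfolding frob_def tr2_def by (simp add: sum_2 mat_def)

lemma frob_A:
  assumes lam: "lam > 0" and mu: "mu > 0"
  shows "1 / (2 * (mu + lam)) * frob X X \<le> frob (Acomp lam mu X) X"
proof -
  define a b c d where "a = X$1$1" "b = X$1$2" "c = X$2$1" "d = X$2$2"
  define S where "S = frob X X"
  define t where "t = tr2 X"
  have fS: "S = a\<^sup>2 + b\<^sup>2 + c\<^sup>2 + d\<^sup>2" unfolding frob_def S_def a_b_c_d_def by (simp add: sum_2 power2_eq_square)
  have tt: "t = a + d" unfolding t_def tr2_def a_b_c_d_def ..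
  have fA: "frob (Acomp lam mu X) X = 1 / (2 * mu) * (S - lam / (2 * mu + 2 * lam) * t * t)"
    unfolding Acomp_def frob_scale frob_diff frob_id S_def t_def by simp
  have t2: "t\<^sup>2 \<le> 2 * S"
  proof -
    have "2 * S - t\<^sup>2 = (a - d)\<^sup>2 + 2 * b\<^sup>2 + 2 * c\<^sup>2" unfolding fS tt by (simp add: power2_eq_square algebra_simps)
    moreover have "0 \<le> (a - d)\<^sup>2 + 2 * b\<^sup>2 + 2 * c\<^sup>2" by simp
    ultimately show ?thesis by linarith
  qed
  define s where "s = lam / (2 * mu + 2 * lam)"
  have nz: "mu + lam \<noteq> 0" "2 * mu + 2 * lam \<noteq> 0" "mu \<noteq> 0" using lam mu by auto
  have s0: "0 \<le> s" unfolding s_def using lam mu by simp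
  have s_eq: "S - s * (2 * S) = S * (mu / (mu + lam))"
    unfolding s_def using nz by (simp add: field_simps)
  have "S - s * (2 * S) \<le> S - s * t * t"
    using mult_left_mono[OF t2 s0] by (simp add: power2_eq_square mult.assoc)
  then have "S * (mu / (mu + lam)) \<le> S - s * t * t" using s_eq by simp
  then have "1 / (2 * mu) * (S * (mu / (mu + lam))) \<le> 1 / (2 * mu) * (S - s * t * t)"
    using mu by (intro mult_left_mono) auto
  moreover have "1 / (2 * mu) * (S * (mu / (mu + lam))) = 1 / (2 * (mu + lam)) * S"
    using nz by (simp add: field_simps)
  ultimately show ?thesis unfolding fA S_def[symmetric] s_def by simp
qed



lemma affel_hull: "affel B c A' K \<Longrightarrow> K = convex hull {c, B *v e1 + c, B *v e2 + c}"
  unfolding affel_def ref_tri_def by (simp add: image_affine_hull)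

lemma affel_convex: "affel B c A' K \<Longrightarrow> convex K"
  using affel_hull convex_convex_hull by metis

lemma affel_interior: assumes "affel B c A' K" shows "interior K \<noteq> {}"
proof -
  have inv: "invertible B" using assms unfolding affel_def by simp
  note ind = affine_indep3[OF inv, of c]
  have "card {c, B *v e1 + c, B *v e2 + c} = Suc DIM(real^2)" using ind by simp
  from interior_convex_hull_eq_empty[OF this] ind(1) show ?thesis
    using affel_hull[OF assms] by simp
qed

lemma mat_cont:
  fixes P :: "pt \<Rightarrow> mat2"
  assumes "\<And>a b. continuous_on UNIV (\<lambda>x. P x $ a $ b)"
  shows "continuous_on UNIV P"
proof -
  have "continuous_on UNIV (\<lambda>x. \<chi> a. \<chi> b. P x $ a $ b)"
    by (intro continuous_on_vec_lambda assms)
  then show ?thesis by simp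
qed

lemma elem_val_eq:
  fixes P \<tau> :: "pt \<Rightarrow> mat2"
  assumes el: "affel B c A' K" and eq: "\<forall>x\<in>interior K. \<tau> x = P x"
    and Pc: "continuous_on UNIV P" and x: "x \<in> K"
  shows "elem_val K \<tau> x = P x"
proof -
  have ne: "interior K \<noteq> {}" by (rule affel_interior[OF el])
  have cl: "closure (interior K) = K"
    using convex_closure_interior[OF affel_convex[OF el] ne] compact_imp_closed[OF affel_compact[OF el]]
    by (simp add: closure_closed)
  have "x islimpt closure (interior K)"
    by (rule islimpt_closure_open[OF open_interior refl]) (simp add: cl x)
  then have lp: "x islimpt interior K" by (simp add: limpt_of_closure)
  have nt: "\<not> trivial_limit (at x within interior K)" using lp by (simp add: trivial_limit_within)
  have "(P \<longlongrightarrow> P x) (at x within interior K)"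
    using Pc unfolding continuous_on_def by (meson UNIV_I tendsto_within_subset subset_UNIV)
  moreover have "eventually (\<lambda>y. \<tau> y = P y) (at x within interior K)"
    unfolding eventually_at_filter by (rule always_eventually) (simp add: eq)
  ultimately have "(\<tau> \<longlongrightarrow> P x) (at x within interior K)" using tendsto_cong by blast
  then show ?thesis unfolding elem_val_def by (rule tendsto_Lim[OF nt])
qed



lemma elem_bound:
  fixes P \<tau> :: "pt \<Rightarrow> mat2"
  assumes lam: "lam > 0" and mu: "mu > 0"
    and el: "affel B c A' K"
    and uni: "unisolvent (Pkk k k' K) (\<lambda>i. B *v xh i + c) r"
    and B2: "\<forall>g\<in>poly2 (k + k' - 2). (\<Sum>i<r. w i * g (B *v xh i + c)) = integral K g"
    and B1: "\<forall>i<r. w i > 0"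
    and kk: "3 \<le> k" "k < k'"
    and refn: "\<forall>i<r. xh i \<in> ref_tri"
    and eq: "\<forall>x\<in>interior K. \<tau> x = P x"
    and PP: "\<And>a b. (\<lambda>x. P x $ a $ b) \<in> Pkk k k' K"
  shows "1 / (2 * (mu + lam)) / ((real r + 1) * Mc k k' xh r) * integral K (\<lambda>x. frob (P x) (P x))
     \<le> (\<Sum>i<r. w i * frob (Acomp lam mu (elem_val K \<tau> (B *v xh i + c))) (elem_val K \<tau> (B *v xh i + c)))"
proof -
  define M where "M = Mc k k' xh r"
  define al where "al = 1 / (2 * (mu + lam))"
  have Mp: "M > 0" unfolding M_def by (rule Mc_pos)
  have alp: "al > 0" unfolding al_def using lam mu by simp
  have ec: "\<And>a b. continuous_on UNIV (\<lambda>x. P x $ a $ b)"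
    using Q_continuous[OF Pkk_Q[OF el _ _ PP]] kk by simp
  have Pc: "continuous_on UNIV P" by (rule mat_cont[OF ec])
  have chK: "B *v xh i + c \<in> K" if "i < r" for i
    using el refn that unfolding affel_def by auto
  have ev: "elem_val K \<tau> (B *v xh i + c) = P (B *v xh i + c)" if "i < r" for i
    by (rule elem_val_eq[OF el eq Pc chK[OF that]])
  have wnn: "0 \<le> (\<Sum>i<r. w i * (P (B *v xh i + c) $ a $ b)\<^sup>2)" for a b
    using B1 by (intro sum_nonneg mult_nonneg_nonneg) (auto simp: less_imp_le)
  have ent: "integral K (\<lambda>x. (P x $ a $ b)\<^sup>2) \<le> (real r + 1) * M * (\<Sum>i<r. w i * (P (B *v xh i + c) $ a $ b)\<^sup>2)" for a b
  proof -
    have "integral K (\<lambda>x. (P x $ a $ b)\<^sup>2) \<le> real r * M * (\<Sum>i<r. w i * (P (B *v xh i + c) $ a $ b)\<^sup>2)"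
      using scalar_est[OF el uni B2 B1 kk PP] unfolding M_def by simp
    also have "\<dots> \<le> (real r + 1) * M * (\<Sum>i<r. w i * (P (B *v xh i + c) $ a $ b)\<^sup>2)"
      using Mp wnn[of a b] by (intro mult_right_mono) auto
    finally show ?thesis .
  qed
  have ei: "(\<lambda>x. (P x $ a $ b)\<^sup>2) integrable_on K" for a b
    by (rule int_K[OF el]) (intro continuous_intros ec)
  have "integral K (\<lambda>x. frob (P x) (P x)) = (\<Sum>a\<in>UNIV. \<Sum>b\<in>UNIV. integral K (\<lambda>x. (P x $ a $ b)\<^sup>2))"
  proof -
    have "integral K (\<lambda>x. frob (P x) (P x)) = integral K (\<lambda>x. \<Sum>a\<in>UNIV. \<Sum>b\<in>UNIV. (P x $ a $ b)\<^sup>2)"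
      by (simp add: frob_sq)
    also have "\<dots> = (\<Sum>a\<in>UNIV. integral K (\<lambda>x. \<Sum>b\<in>UNIV. (P x $ a $ b)\<^sup>2))"
      by (rule integral_sum) (auto intro!: integrable_sum ei)
    also have "\<dots> = (\<Sum>a\<in>UNIV. \<Sum>b\<in>UNIV. integral K (\<lambda>x. (P x $ a $ b)\<^sup>2))"
      by (intro sum.cong refl integral_sum) (auto intro!: ei)
    finally show ?thesis .
  qed
  also have "\<dots> \<le> (\<Sum>a\<in>UNIV. \<Sum>b\<in>UNIV. (real r + 1) * M * (\<Sum>i<r. w i * (P (B *v xh i + c) $ a $ b)\<^sup>2))"
    by (intro sum_mono ent)
  also have "\<dots> = (real r + 1) * M * (\<Sum>i<r. w i * frob (P (B *v xh i + c)) (P (B *v xh i + c)))"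
    by (simp add: frob_sq sum_distrib_left sum.swap[of _ UNIV "{..<r}"] mult.assoc)
  also have "\<dots> \<le> (real r + 1) * M * (\<Sum>i<r. w i * (frob (Acomp lam mu (P (B *v xh i + c))) (P (B *v xh i + c)) / al))"
  proof -
    have pt: "w i * frob (P (B *v xh i + c)) (P (B *v xh i + c)) \<le> w i * (frob (Acomp lam mu (P (B *v xh i + c))) (P (B *v xh i + c)) / al)"
      if "i < r" for i
    proof -
      have "al * frob (P (B *v xh i + c)) (P (B *v xh i + c)) \<le> frob (Acomp lam mu (P (B *v xh i + c))) (P (B *v xh i + c))"
        using frob_A[OF lam mu] unfolding al_def .
      then have "frob (P (B *v xh i + c)) (P (B *v xh i + c)) \<le> frob (Acomp lam mu (P (B *v xh i + c))) (P (B *v xh i + c)) / al"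
        using alp by (simp add: field_simps)
      then show ?thesis using B1 that by (intro mult_left_mono) (auto simp: less_imp_le)
    qed
    have s: "(\<Sum>i<r. w i * frob (P (B *v xh i + c)) (P (B *v xh i + c))) \<le> (\<Sum>i<r. w i * (frob (Acomp lam mu (P (B *v xh i + c))) (P (B *v xh i + c)) / al))"
      by (rule sum_mono) (use pt in auto)
    show ?thesis by (rule mult_left_mono[OF s]) (use Mp in auto)
  qed
  also have "\<dots> = (real r + 1) * M / al * (\<Sum>i<r. w i * frob (Acomp lam mu (elem_val K \<tau> (B *v xh i + c))) (elem_val K \<tau> (B *v xh i + c)))"
    by (simp add: ev sum_divide_distrib[symmetric] sum_distrib_left)
  finally have main: "integral K (\<lambda>x. frob (P x) (P x)) \<le> (real r + 1) * M / al * (\<Sum>i<r. w i * frob (Acomp lam mu (elem_val K \<tau> (B *v xh i + c))) (elem_val K \<tau> (B *v xh i + c)))" .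
  have pos: "(real r + 1) * M / al > 0" using Mp alp by simp
  show ?thesis
    using main pos Mp alp unfolding M_def[symmetric] al_def[symmetric]
    by (simp add: field_simps)
qed



theorem lemma4p2:
  fixes lam mu :: real and k k' r :: nat and \<Omega> :: "pt set" and F :: "pt set set set"
    and xh :: "nat \<Rightarrow> pt"
    and FK :: "pt set set \<Rightarrow> pt set \<Rightarrow> pt \<Rightarrow> pt"
    and w :: "pt set set \<Rightarrow> pt set \<Rightarrow> nat \<Rightarrow> real"
  assumes lam: "lam > 0" and mu: "mu > 0"
    and kk: "3 \<le> k" "k < k'"
    and dom: "polygonal_domain \<Omega>"
    and tri: "\<forall>T\<in>F. conforming_triangulation \<Omega> T"
    and shape: "shape_regular F"
    and ref_nodes: "\<forall>i<r. xh i \<in> ref_tri"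
    and affine: "\<forall>T\<in>F. \<forall>K\<in>T. (\<exists>B c. invertible B \<and> (\<forall>x. FK T K x = B *v x + c)) \<and>
                                  FK T K ` ref_tri = K"
    and unisolv: "\<forall>T\<in>F. \<forall>K\<in>T. unisolvent (Pkk k k' K) (\<lambda>i. FK T K (xh i)) r"
    and vertices: "\<forall>T\<in>F. \<forall>K\<in>T. verts K \<subseteq> (\<lambda>i. FK T K (xh i)) ` {..<r}"
    and edges: "\<forall>T\<in>F. \<forall>K\<in>T. \<forall>a\<in>verts K. \<forall>b\<in>verts K. a \<noteq> b \<longrightarrow>
                   edge_unisolvent k a b (\<lambda>i. FK T K (xh i)) r"
    and B1: "\<forall>T\<in>F. \<forall>K\<in>T. \<forall>i<r. w T K i > 0"
    and B2: "\<forall>T\<in>F. \<forall>K\<in>T. \<forall>g\<in>poly2 (k + k' - 2).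
                (\<Sum>i<r. w T K i * g (FK T K (xh i))) = integral K g"
  shows "\<exists>C>0. \<forall>T\<in>F. \<forall>\<tau>\<in>Sigma_kkh k k' \<Omega> T.
           lumped lam mu r (w T) (\<lambda>K i. FK T K (xh i)) T \<tau> \<tau> \<ge> C * L2sq \<Omega> \<tau>"
proof -
  define al where "al = 1 / (2 * (mu + lam))"
  define C where "C = al / ((real r + 1) * Mc k k' xh r)"
  have Cp: "C > 0" unfolding C_def al_def using lam mu Mc_pos[of k k' xh r] by simp
  show ?thesis
  proof (intro exI[of _ C] conjI Cp ballI)
    fix T \<tau> assume T: "T \<in> F" and tau: "\<tau> \<in> Sigma_kkh k k' \<Omega> T"
    have ct: "conforming_triangulation \<Omega> T" using tri T by blast
    then have Tfin: "finite T" and Tcov: "\<Union>T = closure \<Omega>" unfolding conforming_triangulation_def by auto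
    obtain \<sigma> \<tau>' where tdef: "\<tau> = (\<lambda>x. \<sigma> x + \<tau>' x)" and sig: "\<sigma> \<in> Sigma_kh k \<Omega> T"
      and lm: "\<tau>' \<in> Lambda_kk k k' \<Omega> T"
      using tau unfolding Sigma_kkh_def by blast
    obtain \<sigma>1 \<sigma>2 where sdef: "\<sigma> = (\<lambda>x. \<sigma>1 x + \<sigma>2 x)" and s1: "\<forall>K\<in>T. restr_poly k K \<sigma>1"
      and s2: "\<forall>K\<in>T. restr_poly k K \<sigma>2"
      using sig unfolding Sigma_kh_def by blast
    have tb: "\<forall>K\<in>T. restr_bubble k k' K \<tau>'" using lm unfolding Lambda_kk_def by blast
    define good where "good K P \<longleftrightarrow> (\<forall>x\<in>interior K. \<tau> x = P x) \<and> (\<forall>a b. (\<lambda>x. P x $ a $ b) \<in> Pkk k k' K)"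
      for K and P :: "pt \<Rightarrow> mat2"
    have exP: "\<exists>P. good K P" if K: "K \<in> T" for K
    proof -
      obtain P1 where P1: "symmat_in (poly2 k) P1" "\<forall>x\<in>interior K. \<sigma>1 x = P1 x"
        using s1 K unfolding restr_poly_def by blast
      obtain P2 where P2: "symmat_in (poly2 k) P2" "\<forall>x\<in>interior K. \<sigma>2 x = P2 x"
        using s2 K unfolding restr_poly_def by blast
      obtain Qb where Qb: "symmat_in (homsum2 (k - 2) (k' - 3)) Qb" "\<forall>x\<in>interior K. \<tau>' x = bubble K x *\<^sub>R Qb x"
        using tb K unfolding restr_bubble_def by blast
      define P where "P x = P1 x + P2 x + bubble K x *\<^sub>R Qb x" for x
      have "good K P" unfolding good_def
      proof (intro conjI ballI allI)
        fix x assume "x \<in> interior K" then show "\<tau> x = P x" using P1 P2 Qb unfolding tdef sdef P_def by simp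
      next
        fix a b
        have p: "(\<lambda>x. P1 x $ a $ b + P2 x $ a $ b) \<in> poly2 k"
          using P1(1) P2(1) unfolding symmat_in_def by (intro poly2_add) auto
        have q: "(\<lambda>x. Qb x $ a $ b) \<in> poly2 (k' - 3)"
          using Qb(1) unfolding symmat_in_def by (intro Q_poly2 homsum_Q) auto
        show "(\<lambda>x. P x $ a $ b) \<in> Pkk k k' K" by (rule PkkI[OF p q]) (simp add: P_def)
      qed
      then show ?thesis by blast
    qed
    define PK where "PK K = (SOME P. good K P)" for K
    have gPK: "good K (PK K)" if "K \<in> T" for K
      unfolding PK_def using exP[OF that] by (rule someI_ex)
    have elt: "\<exists>B c A'. affel B c A' K \<and> (\<forall>x. FK T K x = B *v x + c)" if K: "K \<in> T" for K
    proof -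
      have "(\<exists>B c. invertible B \<and> (\<forall>x. FK T K x = B *v x + c)) \<and> FK T K ` ref_tri = K"
        using affine T K by blast
      then obtain B c where Bc: "invertible B" "\<forall>x. FK T K x = B *v x + c" and im: "FK T K ` ref_tri = K"
        by blast
      have "FK T K = (\<lambda>x. B *v x + c)" using Bc(2) by (intro ext) simp
      then have "K = (\<lambda>x. B *v x + c) ` ref_tri" using im by simp
      then obtain A' where "affel B c A' K" using affel_exists[OF Bc(1)] by blast
      then show ?thesis using Bc(2) by blast
    qed
    have per: "C * integral K (\<lambda>x. frob (PK K x) (PK K x))
       \<le> (\<Sum>i<r. w T K i * frob (Acomp lam mu (elem_val K \<tau> (FK T K (xh i)))) (elem_val K \<tau> (FK T K (xh i))))"
      if K: "K \<in> T" for K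
    proof -
      obtain B c A' where el: "affel B c A' K" and FKe: "\<forall>x. FK T K x = B *v x + c" using elt[OF K] by blast
      have "unisolvent (Pkk k k' K) (\<lambda>i. FK T K (xh i)) r" using unisolv T K by blast
      then have uni: "unisolvent (Pkk k k' K) (\<lambda>i. B *v xh i + c) r" by (simp add: FKe)
      have "\<forall>g\<in>poly2 (k + k' - 2). (\<Sum>i<r. w T K i * g (FK T K (xh i))) = integral K g" using B2 T K by blast
      then have B2': "\<forall>g\<in>poly2 (k + k' - 2). (\<Sum>i<r. w T K i * g (B *v xh i + c)) = integral K g" by (simp add: FKe)
      have B1': "\<forall>i<r. w T K i > 0" using B1 T K by blast
      have g: "\<forall>x\<in>interior K. \<tau> x = PK K x" "\<And>a b. (\<lambda>x. PK K x $ a $ b) \<in> Pkk k k' K"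
        using gPK[OF K] unfolding good_def by auto
      have FKf: "FK T K = (\<lambda>x. B *v x + c)" using FKe by (intro ext) simp
      note eb = elem_bound[OF lam mu el uni B2' B1' kk ref_nodes g]
      show ?thesis unfolding C_def al_def FKf using eb by (simp only:)
    qed
    have L2: "L2sq \<Omega> \<tau> \<le> (\<Sum>K\<in>T. integral K (\<lambda>x. frob (PK K x) (PK K x)))"
      unfolding L2sq_def
    proof (rule L2_bound[OF Tfin])
      show "\<Omega> \<subseteq> \<Union>T" using Tcov closure_subset by blast
      show "open \<Omega>" using dom unfolding polygonal_domain_def by blast
      show "convex K \<and> compact K" if "K \<in> T" for K
        using elt[OF that] affel_convex affel_compact by blast
      show "continuous_on UNIV (\<lambda>x. frob (PK K x) (PK K x))" if K: "K \<in> T" for K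
      proof -
        obtain B c A' where el: "affel B c A' K" using elt[OF K] by blast
        have ec: "continuous_on UNIV (\<lambda>x. PK K x $ a $ b)" for a b
        proof -
          have m: "(\<lambda>x. PK K x $ a $ b) \<in> Pkk k k' K" using gPK[OF K] unfolding good_def by blast
          show ?thesis using Q_continuous[OF Pkk_Q[OF el _ _ m]] kk by simp
        qed
        show ?thesis unfolding frob_sq by (intro continuous_intros ec)
      qed
      show "0 \<le> frob (PK K x) (PK K x)" for K x by (rule frob_nonneg)
      show "0 \<le> frob (\<tau> x) (\<tau> x)" for x by (rule frob_nonneg)
      show "frob (\<tau> x) (\<tau> x) = frob (PK K x) (PK K x)" if "K \<in> T" "x \<in> interior K" for K x
        using gPK[OF that(1)] that(2) unfolding good_def by simp
    qed
    have "C * L2sq \<Omega> \<tau> \<le> C * (\<Sum>K\<in>T. integral K (\<lambda>x. frob (PK K x) (PK K x)))"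
      using L2 Cp by (intro mult_left_mono) auto
    also have "\<dots> = (\<Sum>K\<in>T. C * integral K (\<lambda>x. frob (PK K x) (PK K x)))"
      by (simp add: sum_distrib_left)
    also have "\<dots> \<le> (\<Sum>K\<in>T. \<Sum>i<r. w T K i * frob (Acomp lam mu (elem_val K \<tau> (FK T K (xh i)))) (elem_val K \<tau> (FK T K (xh i))))"
      by (intro sum_mono per)
    also have "\<dots> = lumped lam mu r (w T) (\<lambda>K i. FK T K (xh i)) T \<tau> \<tau>"
      unfolding lumped_def ..
    finally show "C * L2sq \<Omega> \<tau> \<le> lumped lam mu r (w T) (\<lambda>K i. FK T K (xh i)) T \<tau> \<tau>" .
  qed
qed

end
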